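(* Let $m\ge1$, $\epsilon\in\{1,-1\}$, and let $M,M'\subset\mathbb{C}^2$ be (formal or real-analytic) hypersurfaces each given by an equation of the form $v=\frac12u^m\bigl(\epsilon|z|^2+\sum_{k,l\ge2}h_{kl}(u)z^k\bar z^l\bigr)$, $w=u+iv$ (with the same $m$ and $\epsilon$). Let $H(z,w)=(F(z,w),G(z,w))$ be a formal transformation with $H(0)=0$ and invertible Jacobian $H'(0)$ which maps $M$ into $M'$. Then there are $\lambda\in\mathbb{C}\setminus\{0\}$ and $\mu\in\mathbb{R}$ with $F_z(0,0)=\lambda$, $G_w(0,0)=\mu$, $\mu^{1-m}=|\lambda|^2$, and moreover $G=O(w)$ and $G_z=O(w^{m+1})$. In addition, $\frac{\partial^\ell G}{\partial w^\ell}(0,0)\in\mathbb{R}$ for all $\ell\le m$.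
   Context: $O(w^k)$ means divisibility of the formal power series by $w^k$. *)

theory Defs
  imports Complex_Main
begin

text \<open>Formal power series in two variables (z,w): coefficient of z^i w^j is f i j.
  Formal power series in three variables (z, chi = conj z, u): coefficient of
  z^a chi^b u^c is A a b c.\<close>

type_synonym ser2 = "nat \<Rightarrow> nat \<Rightarrow> complex"
type_synonym ser3 = "nat \<Rightarrow> nat \<Rightarrow> nat \<Rightarrow> complex"

definition mul3 :: "ser3 \<Rightarrow> ser3 \<Rightarrow> ser3" where
  "mul3 A B = (\<lambda>a b c. \<Sum>i\<le>a. \<Sum>j\<le>b. \<Sum>k\<le>c. A i j k * B (a-i) (b-j) (c-k))"

definition one3 :: ser3 where
  "one3 = (\<lambda>a b c. if a = 0 \<and> b = 0 \<and> c = 0 then 1 else 0)"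

definition zero3 :: ser3 where
  "zero3 = (\<lambda>a b c. 0)"

fun pow3 :: "ser3 \<Rightarrow> nat \<Rightarrow> ser3" where
  "pow3 A 0 = one3"
| "pow3 A (Suc n) = mul3 A (pow3 A n)"

text \<open>Substitution P(A,B,C) of three series without constant term into a
  three-variable series; only monomials of total degree \<le> a+b+c contribute to
  the coefficient at (a,b,c).\<close>
definition subst3 :: "ser3 \<Rightarrow> ser3 \<Rightarrow> ser3 \<Rightarrow> ser3 \<Rightarrow> ser3" where
  "subst3 P A B C = (\<lambda>a b c.
     \<Sum>i\<le>a+b+c. \<Sum>j\<le>a+b+c-i. \<Sum>k\<le>a+b+c-i-j.
       P i j k * mul3 (pow3 A i) (mul3 (pow3 B j) (pow3 C k)) a b c)"

definition varZ :: ser3 where "varZ = (\<lambda>a b c. if a = 1 \<and> b = 0 \<and> c = 0 then 1 else 0)"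
definition varX :: ser3 where "varX = (\<lambda>a b c. if a = 0 \<and> b = 1 \<and> c = 0 then 1 else 0)"
definition varU :: ser3 where "varU = (\<lambda>a b c. if a = 0 \<and> b = 0 \<and> c = 1 then 1 else 0)"

definition lift2 :: "ser2 \<Rightarrow> ser3" where
  "lift2 f = (\<lambda>i j k. if k = 0 then f i j else 0)"

text \<open>Conjugating the coefficients : conj(f(z,w)) = (cnj2 f)(conj z, conj w).\<close>
definition cnj2 :: "ser2 \<Rightarrow> ser2" where
  "cnj2 f = (\<lambda>i j. cnj (f i j))"

text \<open>Defining function of the hypersurface
  v = 1/2 u^m (eps |z|^2 + sum_{k,l>=2} h_kl(u) z^k conj(z)^l),
  where h k l j is the coefficient of u^j in h_kl(u).\<close>
definition hyp_phi :: "nat \<Rightarrow> real \<Rightarrow> (nat \<Rightarrow> nat \<Rightarrow> nat \<Rightarrow> complex) \<Rightarrow> ser3" where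
  "hyp_phi m eps h = (\<lambda>a b c.
      (if a = 1 \<and> b = 1 \<and> c = m then complex_of_real eps / 2 else 0)
    + (if 2 \<le> a \<and> 2 \<le> b \<and> m \<le> c then h a b (c - m) / 2 else 0))"

definition real_hyp_data :: "(nat \<Rightarrow> nat \<Rightarrow> nat \<Rightarrow> complex) \<Rightarrow> bool" where
  "real_hyp_data h \<longleftrightarrow> (\<forall>k l j. 2 \<le> k \<longrightarrow> 2 \<le> l \<longrightarrow> cnj (h k l j) = h l k j)"

text \<open>H = (F,G) maps M = {v = phi(z,conj z,u)} into M' = {v = phi'(z,conj z,u)}
  formally: after substituting the parametrization w = u + i phi(z,chi,u) of M
  (and conj w = u - i phi), the identity Im G = phi'(F, conj F, Re G) holds as
  an identity of formal power series in (z, chi, u).\<close>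
definition maps_into :: "ser3 \<Rightarrow> ser3 \<Rightarrow> ser2 \<Rightarrow> ser2 \<Rightarrow> bool" where
  "maps_into phi phi' F G \<longleftrightarrow>
    (let W  = (\<lambda>a b c. varU a b c + \<i> * phi a b c);
         Wb = (\<lambda>a b c. varU a b c - \<i> * phi a b c);
         Fz = subst3 (lift2 F) varZ W zero3;
         Fb = subst3 (lift2 (cnj2 F)) varX Wb zero3;
         Gz = subst3 (lift2 G) varZ W zero3;
         Gb = subst3 (lift2 (cnj2 G)) varX Wb zero3
     in \<forall>a b c. Gz a b c - Gb a b c
          = 2 * \<i> * subst3 phi' Fz Fb (\<lambda>a b c. (Gz a b c + Gb a b c) / 2) a b c)"

definition dz2 :: "ser2 \<Rightarrow> ser2" where
  "dz2 f = (\<lambda>i j. of_nat (Suc i) * f (Suc i) j)"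
definition dw2 :: "ser2 \<Rightarrow> ser2" where
  "dw2 f = (\<lambda>i j. of_nat (Suc j) * f i (Suc j))"

definition O_w :: "nat \<Rightarrow> ser2 \<Rightarrow> bool" where
  "O_w k f \<longleftrightarrow> (\<forall>i j. j < k \<longrightarrow> f i j = 0)"

end

theory Submission
  imports Defs
begin

definition mono3 :: "nat \<Rightarrow> nat \<Rightarrow> nat \<Rightarrow> ser3" where
  "mono3 p q r = (\<lambda>a b c. if a = p \<and> b = q \<and> c = r then 1 else 0)"
definition uo :: "nat \<Rightarrow> ser3 \<Rightarrow> bool" where
  "uo p A \<longleftrightarrow> (\<forall>a b c. c < p \<longrightarrow> A a b c = 0)"
definition u0o :: "nat \<Rightarrow> ser3 \<Rightarrow> bool" where
  "u0o p A \<longleftrightarrow> (\<forall>a c. c < p \<longrightarrow> A a 0 c = 0)"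
definition swap3 :: "ser3 \<Rightarrow> ser3" where
  "swap3 A = (\<lambda>a b c. A b a c)"

lemma sum3_delta:
  "(\<Sum>i\<le>(a::nat). \<Sum>j\<le>(b::nat). \<Sum>k\<le>(c::nat). if i = p \<and> j = q \<and> k = r then X i j k else (0::'a::comm_monoid_add))
   = (if p \<le> a \<and> q \<le> b \<and> r \<le> c then X p q r else 0)"
proof -
  have 1: "(\<Sum>k\<le>c. if i = p \<and> j = q \<and> k = r then X i j k else (0::'a))
     = (if i = p \<and> j = q then (if r \<le> c then X i j r else 0) else 0)" for i j
    by (cases "i = p \<and> j = q") (auto simp: sum.delta)
  have 2: "(\<Sum>j\<le>b. (if i = p \<and> j = q then (if r \<le> c then X i j r else 0) else (0::'a)))
     = (if i = p then (if q \<le> b \<and> r \<le> c then X i q r else 0) else 0)" for i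
    by (cases "i = p") (auto simp: sum.delta)
  show ?thesis by (simp only: 1 2) (simp add: sum.delta)
qed

lemma sum_only:
  assumes "\<And>k. k \<le> c \<Longrightarrow> k \<noteq> kk \<Longrightarrow> f k = 0" "kk \<le> c"
  shows "(\<Sum>k\<le>(c::nat). f k) = (f kk :: 'a::comm_monoid_add)"
proof -
  have "(\<Sum>k\<le>c. f k) = (\<Sum>k\<le>c. if k = kk then f kk else 0)"
    by (rule sum.cong) (auto simp: assms)
  then show ?thesis using assms(2) by (simp add: sum.delta)
qed

lemma mul3_mono_left:
  "mul3 (mono3 p q r) B a b c = (if p \<le> a \<and> q \<le> b \<and> r \<le> c then B (a-p) (b-q) (c-r) else 0)"
proof -
  have "mul3 (mono3 p q r) B a b c = (\<Sum>i\<le>a. \<Sum>j\<le>b. \<Sum>k\<le>c. if i = p \<and> j = q \<and> k = r then B (a-i) (b-j) (c-k) else 0)"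
    unfolding mul3_def mono3_def by (intro sum.cong refl) auto
  then show ?thesis by (simp only: sum3_delta)
qed

lemma mul3_one_right: "mul3 A one3 = A"
proof (intro ext)
  fix a b c
  have "mul3 A one3 a b c = (\<Sum>i\<le>a. \<Sum>j\<le>b. \<Sum>k\<le>c. if i = a \<and> j = b \<and> k = c then A i j k else 0)"
    unfolding mul3_def one3_def by (intro sum.cong refl) auto
  then show "mul3 A one3 a b c = A a b c" by (simp only: sum3_delta) simp
qed

lemma one3_mono: "one3 = mono3 0 0 0" unfolding one3_def mono3_def by auto
lemma varZ_mono: "varZ = mono3 1 0 0" unfolding varZ_def mono3_def by auto
lemma varX_mono: "varX = mono3 0 1 0" unfolding varX_def mono3_def by auto

lemma pow3_one: "pow3 A 1 = A" by (simp add: mul3_one_right)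

lemma pow3_varZ: "pow3 varZ i = mono3 i 0 0"
proof (induction i)
  case 0 then show ?case by (simp add: one3_mono)
next
  case (Suc i) then show ?case
    by (auto simp: varZ_mono mul3_mono_left intro!: ext) (auto simp: mono3_def)
qed


lemma pow3_varX: "pow3 varX i = mono3 0 i 0"
proof (induction i)
  case 0 then show ?case by (simp add: one3_mono)
next
  case (Suc i) then show ?case
    by (auto simp: varX_mono mul3_mono_left intro!: ext) (auto simp: mono3_def)
qed

lemma sum2_delta:
  "(\<Sum>i\<le>(a::nat). \<Sum>j\<le>(b::nat). if i = p \<and> j = q then X i j else (0::'a::comm_monoid_add))
   = (if p \<le> a \<and> q \<le> b then X p q else 0)"
proof -
  have 1: "(\<Sum>j\<le>b. if i = p \<and> j = q then X i j else (0::'a))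
     = (if i = p then (if q \<le> b then X i q else 0) else 0)" for i
    by (cases "i = p") (auto simp: sum.delta)
  show ?thesis by (simp only: 1) (simp add: sum.delta)
qed

lemma subst_lift2:
  "subst3 (lift2 f) A B zero3 a b c =
    (\<Sum>i\<le>a+b+c. \<Sum>j\<le>a+b+c-i. f i j * mul3 (pow3 A i) (pow3 B j) a b c)"
  unfolding subst3_def
proof (intro sum.cong refl)
  fix i j
  show "(\<Sum>k\<le>a + b + c - i - j. lift2 f i j k * mul3 (pow3 A i) (mul3 (pow3 B j) (pow3 zero3 k)) a b c)
     = f i j * mul3 (pow3 A i) (pow3 B j) a b c"
    by (subst sum_only[where kk=0]) (auto simp: lift2_def mul3_one_right)
qed

lemma mul3_swap: "mul3 (swap3 A) (swap3 B) = swap3 (mul3 A B)"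
  unfolding mul3_def swap3_def by (intro ext) (rule sum.swap)

lemma swap3_one: "swap3 one3 = one3" unfolding swap3_def one3_def by (intro ext) auto

lemma pow3_swap: "pow3 (swap3 A) n = swap3 (pow3 A n)"
  by (induction n) (simp_all add: swap3_one mul3_swap)

lemma swap3_varZ: "swap3 varZ = varX" unfolding swap3_def varZ_def varX_def by (intro ext) auto

lemma subst_swap:
  "subst3 (lift2 f) varX (swap3 B) zero3 a b c = subst3 (lift2 f) varZ B zero3 b a c"
proof -
  have "mul3 (pow3 varX i) (pow3 (swap3 B) j) a b c = mul3 (pow3 varZ i) (pow3 B j) b a c" for i j
    by (simp add: swap3_varZ[symmetric] pow3_swap mul3_swap) (simp add: swap3_def)
  then show ?thesis by (simp add: subst_lift2 add.commute add.left_commute)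
qed

lemma mul3_varZ_left:
  "mul3 (pow3 varZ i) Y a b c = (if i \<le> a then Y (a-i) b c else 0)"
  by (simp add: pow3_varZ mul3_mono_left)

lemma uo_mul: assumes "uo p A" "uo q B" shows "uo (p+q) (mul3 A B)"
  unfolding uo_def mul3_def
proof (intro allI impI sum.neutral ballI)
  fix a b c i j k assume "c < p + q" "k \<in> {..c}"
  then show "A i j k * B (a - i) (b - j) (c - k) = 0"
    using assms unfolding uo_def by (cases "k < p") auto
qed

lemma uo_one: "uo 0 one3" unfolding uo_def by auto

lemma uo_pow: assumes "uo p A" shows "uo (p*n) (pow3 A n)"
  by (induction n) (simp_all add: uo_one uo_mul[OF assms])

lemma u0o_mul: assumes "u0o p A" "u0o q B" shows "u0o (p+q) (mul3 A B)"
  unfolding u0o_def mul3_def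
proof (intro allI impI sum.neutral ballI)
  fix a c i j k assume "c < p + q" "k \<in> {..c}" "j \<in> {..0::nat}"
  then show "A i j k * B (a - i) (0 - j) (c - k) = 0"
    using assms unfolding u0o_def by (cases "k < p") auto
qed

lemma u0o_pow: assumes "u0o p A" shows "u0o (p*n) (pow3 A n)"
  by (induction n) (simp_all add: u0o_mul[OF assms], simp add: u0o_def)

lemma uo_u0o: "uo p A \<Longrightarrow> u0o p A" unfolding uo_def u0o_def by auto
lemma u0o_zero: "u0o 0 A" unfolding u0o_def by auto
lemma uo_zero: "uo 0 A" unfolding uo_def by auto

lemma mul3_00: "mul3 A B 0 0 c = (\<Sum>k\<le>c. A 0 0 k * B 0 0 (c-k))"
  unfolding mul3_def by simp
lemma mul3_0b: "mul3 A B 0 b c = (\<Sum>j\<le>b. \<Sum>k\<le>c. A 0 j k * B 0 (b-j) (c-k))"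
  unfolding mul3_def by simp
lemma mul3_11: "mul3 A B 1 1 c = (\<Sum>k\<le>c. A 0 0 k * B 1 1 (c-k) + A 0 1 k * B 1 0 (c-k)
      + A 1 0 k * B 0 1 (c-k) + A 1 1 k * B 0 0 (c-k))"
  unfolding mul3_def by (simp add: atMost_Suc sum.distrib)


lemma PW_0b:
  assumes W1: "\<And>b c. W 0 b c = (if b = 0 \<and> c = 1 then 1 else 0)"
  shows "pow3 W j 0 b c = (if b = 0 \<and> c = j then 1 else 0)"
proof (induction j arbitrary: b c)
  case 0 then show ?case by (auto simp: one3_def)
next
  case (Suc j)
  have "pow3 W (Suc j) 0 b c = (\<Sum>j'\<le>b. \<Sum>k\<le>c. W 0 j' k * pow3 W j 0 (b-j') (c-k))"
    by (simp add: mul3_0b)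
  also have "\<dots> = (\<Sum>j'\<le>b. \<Sum>k\<le>c. if j' = 0 \<and> k = 1 then pow3 W j 0 (b-j') (c-k) else 0)"
    by (intro sum.cong refl) (simp add: W1)
  also have "\<dots> = (if 1 \<le> c then pow3 W j 0 b (c-1) else 0)"
    by (simp only: sum2_delta) simp
  finally show ?case using Suc by auto
qed

lemma PW_a0:
  assumes W2: "\<And>a c. W a 0 c = (if a = 0 \<and> c = 1 then 1 else 0)"
  shows "pow3 W j a 0 c = (if a = 0 \<and> c = j then 1 else 0)"
proof -
  have "pow3 (swap3 W) j 0 a c = (if a = 0 \<and> c = j then 1 else 0)"
    by (rule PW_0b) (simp add: swap3_def W2)
  then show ?thesis by (simp only: pow3_swap) (simp add: swap3_def)
qed

lemma PW_11:
  assumes W1: "\<And>b c. W 0 b c = (if b = 0 \<and> c = 1 then 1 else 0)"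
    and W2: "\<And>a c. W a 0 c = (if a = 0 \<and> c = 1 then 1 else 0)"
    and W3: "\<And>c. W 1 1 c = (if c = m then e else 0)"
    and m1: "m \<ge> 1"
  shows "pow3 W j 1 1 c = (if 1 \<le> j \<and> c = m + j - 1 then of_nat j * e else 0)"
proof (induction j arbitrary: c)
  case 0 then show ?case by (auto simp: one3_def)
next
  case (Suc j)
  have "pow3 W (Suc j) 1 1 c = (\<Sum>k\<le>c. W 0 0 k * pow3 W j 1 1 (c-k) + W 0 1 k * pow3 W j 1 0 (c-k)
      + W 1 0 k * pow3 W j 0 1 (c-k) + W 1 1 k * pow3 W j 0 0 (c-k))"
    by (simp only: pow3.simps) (rule mul3_11)
  also have "\<dots> = (\<Sum>k\<le>c. (if k = 1 then pow3 W j 1 1 (c-1) else 0)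
       + (if k = m then e * pow3 W j 0 0 (c-m) else 0))"
    using W3[unfolded One_nat_def] by (intro sum.cong refl) (simp add: W1 W2)
  also have "\<dots> = (if 1 \<le> c then pow3 W j 1 1 (c-1) else 0)
       + (if m \<le> c then e * pow3 W j 0 0 (c-m) else 0)"
    by (simp add: sum.distrib sum.delta)
  also have "\<dots> = (if 1 \<le> Suc j \<and> c = m + Suc j - 1 then of_nat (Suc j) * e else 0)"
    using m1 Suc.IH[unfolded One_nat_def] by (auto simp: PW_0b[where W=W, OF W1] algebra_simps one3_def)
  finally show ?case .
qed


lemma sum2_delta_dep:
  "(\<Sum>i\<le>(N::nat). \<Sum>j\<le>N-i. if i = p \<and> j = q then X else (0::'a::comm_monoid_add))
   = (if p + q \<le> N then X else 0)"
proof -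
  have 1: "(\<Sum>j\<le>N-i. if i = p \<and> j = q then X else (0::'a))
     = (if i = p then (if q \<le> N - p then X else 0) else 0)" for i
    by (cases "i = p") (auto simp: sum.delta)
  show ?thesis by (simp only: 1) (auto simp: sum.delta)
qed

lemma SZ_gen:
  "subst3 (lift2 f) varZ W zero3 a b c =
    (\<Sum>i\<le>a+b+c. \<Sum>j\<le>a+b+c-i. f i j * (if i \<le> a then pow3 W j (a-i) b c else 0))"
  by (simp add: subst_lift2 mul3_varZ_left)

lemma SZ_a0:
  assumes W2: "\<And>a c. W a 0 c = (if a = 0 \<and> c = 1 then 1 else 0)"
  shows "subst3 (lift2 f) varZ W zero3 a 0 c = f a c"
proof -
  have "subst3 (lift2 f) varZ W zero3 a 0 c =
    (\<Sum>i\<le>a+0+c. \<Sum>j\<le>a+0+c-i. if i = a \<and> j = c then f a c else 0)"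
    unfolding SZ_gen by (intro sum.cong refl) (auto simp: PW_a0[where W=W, OF W2])
  then show ?thesis by (simp only: sum2_delta_dep) simp
qed

lemma SZ_0b:
  assumes W1: "\<And>b c. W 0 b c = (if b = 0 \<and> c = 1 then 1 else 0)"
  shows "subst3 (lift2 f) varZ W zero3 0 b c = (if b = 0 then f 0 c else 0)"
proof -
  have "subst3 (lift2 f) varZ W zero3 0 b c =
    (\<Sum>i\<le>0+b+c. \<Sum>j\<le>0+b+c-i. if i = 0 \<and> j = c then (if b = 0 then f 0 c else 0) else 0)"
    unfolding SZ_gen by (intro sum.cong refl) (auto simp: PW_0b[where W=W, OF W1])
  then show ?thesis by (simp only: sum2_delta_dep) simp
qed

lemma SZ_ab0:
  assumes W4: "uo 1 W"
  shows "subst3 (lift2 f) varZ W zero3 a b 0 = (if b = 0 then f a 0 else 0)"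
proof -
  have z: "pow3 W j x y 0 = (if j = 0 \<and> x = 0 \<and> y = 0 then 1 else 0)" for j x y
  proof (cases "j = 0")
    case True then show ?thesis by (simp add: one3_def)
  next
    case False then show ?thesis using uo_pow[OF W4, of j] unfolding uo_def by auto
  qed
  have "subst3 (lift2 f) varZ W zero3 a b 0 =
    (\<Sum>i\<le>a+b+0. \<Sum>j\<le>a+b+0-i. if i = a \<and> j = 0 then (if b = 0 then f a 0 else 0) else 0)"
    unfolding SZ_gen by (intro sum.cong refl) (auto simp: z one3_def)
  then show ?thesis by (simp only: sum2_delta_dep) simp
qed

lemma SZ_11m:
  assumes W1: "\<And>b c. W 0 b c = (if b = 0 \<and> c = 1 then 1 else 0)"
    and W2: "\<And>a c. W a 0 c = (if a = 0 \<and> c = 1 then 1 else 0)"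
    and W3: "\<And>c. W 1 1 c = (if c = m then e else 0)"
    and m1: "m \<ge> 1"
  shows "subst3 (lift2 f) varZ W zero3 1 1 m = f 0 1 * e"
proof -
  have "subst3 (lift2 f) varZ W zero3 1 1 m =
    (\<Sum>i\<le>1+1+m. \<Sum>j\<le>1+1+m-i. if i = 0 \<and> j = 1 then f 0 1 * e else 0)"
    unfolding SZ_gen
  proof (intro sum.cong refl)
    fix i j
    show "f i j * (if i \<le> 1 then pow3 W j (1 - i) 1 m else 0) =
          (if i = 0 \<and> j = 1 then f 0 1 * e else 0)"
    proof (cases "i = 0")
      case True then show ?thesis using m1 PW_11[where W=W, OF W1 W2 W3 m1, of j m, unfolded One_nat_def] by auto
    next
      case False then show ?thesis by (auto simp: PW_0b[where W=W, OF W1])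
    qed
  qed
  then show ?thesis by (simp only: sum2_delta_dep) simp
qed

lemma swap3_swap3: "swap3 (swap3 A) = A" unfolding swap3_def by simp

lemma SX_swap: "subst3 (lift2 f) varX Wb zero3 a b c = subst3 (lift2 f) varZ (swap3 Wb) zero3 b a c"
  using subst_swap[of f "swap3 Wb" a b c] by (simp add: swap3_swap3)


lemma subst_phi_b0:
  assumes B: "u0o 1 B" and C: "u0o r C" and cl: "c < 1 + m*r"
    and P: "\<And>i j k. P i j k \<noteq> 0 \<Longrightarrow> j \<ge> 1 \<and> k \<ge> m"
  shows "subst3 P A B C a 0 c = 0"
  unfolding subst3_def
proof (intro sum.neutral ballI)
  fix i j k
  show "P i j k * mul3 (pow3 A i) (mul3 (pow3 B j) (pow3 C k)) a 0 c = 0"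
  proof (cases "P i j k = 0")
    case False
    then have jk: "j \<ge> 1" "k \<ge> m" using P by auto
    have "u0o (0 + (1*j + r*k)) (mul3 (pow3 A i) (mul3 (pow3 B j) (pow3 C k)))"
      by (intro u0o_mul u0o_pow B C u0o_zero)
    moreover have "c < 0 + (1*j + r*k)"
    proof -
      have "m * r \<le> r * k" using jk by (simp add: mult.commute)
      then show ?thesis using cl jk by linarith
    qed
    ultimately show ?thesis unfolding u0o_def by simp
  qed simp
qed

lemma sum3_delta_dep:
  "(\<Sum>i\<le>(N::nat). \<Sum>j\<le>N-i. \<Sum>k\<le>N-i-j. if i = p \<and> j = q \<and> k = r then X else (0::'a::comm_monoid_add))
   = (if p + q + r \<le> N then X else 0)"
proof -
  have 1: "(\<Sum>k\<le>N-i-j. if i = p \<and> j = q \<and> k = r then X else (0::'a))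
     = (if i = p \<and> j = q then (if r \<le> N - p - q then X else 0) else 0)" for i j
    by (cases "i = p \<and> j = q") (auto simp: sum.delta)
  have 2: "(\<Sum>j\<le>N-i. if i = p \<and> j = q then (if r \<le> N - p - q then X else 0) else (0::'a))
     = (if i = p then (if q \<le> N - p \<and> r \<le> N - p - q then X else 0) else 0)" for i
    by (cases "i = p") (auto simp: sum.delta)
  show ?thesis by (simp only: 1 2) (auto simp: sum.delta)
qed

lemma hyp_phi_nz:
  "hyp_phi m eps h i j k \<noteq> 0 \<Longrightarrow> (i = 1 \<and> j = 1 \<and> k = m) \<or> (2 \<le> i \<and> 2 \<le> j \<and> m \<le> k)"
  unfolding hyp_phi_def by (auto split: if_splits)

lemma hyp_phi_11m: "hyp_phi m eps h 1 1 m = complex_of_real eps / 2"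
  unfolding hyp_phi_def by simp

lemma subst_phi_11m:
  "subst3 (hyp_phi m eps h) A B C 1 1 m =
     complex_of_real eps / 2 * mul3 A (mul3 B (pow3 C m)) 1 1 m"
proof -
  have "subst3 (hyp_phi m eps h) A B C 1 1 m =
    (\<Sum>i\<le>1+1+m. \<Sum>j\<le>1+1+m-i. \<Sum>k\<le>1+1+m-i-j. if i = 1 \<and> j = 1 \<and> k = m then
        complex_of_real eps / 2 * mul3 A (mul3 B (pow3 C m)) 1 1 m else 0)"
    unfolding subst3_def
  proof (intro sum.cong refl)
    fix i j k assume "i \<in> {..1+1+m}" "j \<in> {..1+1+m-i}" "k \<in> {..1+1+m-i-j}"
    then have s: "i + j + k \<le> m + 2" by auto
    show "hyp_phi m eps h i j k * mul3 (pow3 A i) (mul3 (pow3 B j) (pow3 C k)) 1 1 m =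
      (if i = 1 \<and> j = 1 \<and> k = m then complex_of_real eps / 2 * mul3 A (mul3 B (pow3 C m)) 1 1 m else 0)"
    proof (cases "i = 1 \<and> j = 1 \<and> k = m")
      case True then show ?thesis by (simp add: hyp_phi_def mul3_one_right)
    next
      case False
      have "hyp_phi m eps h i j k = 0"
      proof (rule ccontr)
        assume "hyp_phi m eps h i j k \<noteq> 0"
        from hyp_phi_nz[OF this] show "False" using s False by auto
      qed
      then show ?thesis using False by auto
    qed
  qed
  then show ?thesis by (simp only: sum3_delta_dep) simp
qed

lemma pow_00:
  assumes "uo 1 R" shows "pow3 R n 0 0 n = (R 0 0 1)^n"
proof (induction n)
  case 0 then show ?case by (simp add: one3_def)
next
  case (Suc n)
  have "pow3 R (Suc n) 0 0 (Suc n) = (\<Sum>k\<le>Suc n. R 0 0 k * pow3 R n 0 0 (Suc n - k))"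
    by (simp add: mul3_00)
  also have "\<dots> = R 0 0 1 * pow3 R n 0 0 (Suc n - 1)"
  proof (rule sum_only)
    fix k assume k: "k \<le> Suc n" "k \<noteq> 1"
    show "R 0 0 k * pow3 R n 0 0 (Suc n - k) = 0"
    proof (cases "k = 0")
      case True then show ?thesis using assms unfolding uo_def by simp
    next
      case False
      then have "Suc n - k < 1 * n" using k by simp
      then show ?thesis using uo_pow[OF assms, of n] unfolding uo_def by simp
    qed
  qed simp
  finally show ?case using Suc by simp
qed

lemma dw2_apply: "dw2 f i j = of_nat (Suc j) * f i (Suc j)" by (simp add: dw2_def)

lemma dw2_iter: "\<exists>c::nat. (dw2 ^^ l) f i j = of_nat c * f i (j + l)"
proof (induction l arbitrary: j)
  case 0 then show ?case by (rule exI[of _ 1]) simp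
next
  case (Suc l)
  obtain c where c: "(dw2 ^^ l) f i (Suc j) = of_nat c * f i (Suc j + l)" using Suc by blast
  show ?case
  proof (rule exI[of _ "Suc j * c"])
    have "(dw2 ^^ Suc l) f i j = dw2 ((dw2 ^^ l) f) i j" by simp
    also have "\<dots> = of_nat (Suc j) * (dw2 ^^ l) f i (Suc j)" by (rule dw2_apply)
    finally show "(dw2 ^^ Suc l) f i j = of_nat (Suc j * c) * f i (j + Suc l)" by (simp add: c algebra_simps)
  qed
qed


theorem lemma3p1:
  fixes m :: nat and eps :: real
    and h h' :: "nat \<Rightarrow> nat \<Rightarrow> nat \<Rightarrow> complex"
    and F G :: ser2
  assumes "m \<ge> 1"
    and "eps = 1 \<or> eps = -1"
    and "real_hyp_data h" and "real_hyp_data h'"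
    and "F 0 0 = 0" and "G 0 0 = 0"
    and "F 1 0 * G 0 1 - F 0 1 * G 1 0 \<noteq> 0"
    and "maps_into (hyp_phi m eps h) (hyp_phi m eps h') F G"
  shows "\<exists>lam mu. lam \<noteq> 0 \<and> dz2 F 0 0 = lam \<and> dw2 G 0 0 = complex_of_real mu
            \<and> mu powi (1 - int m) = (cmod lam)^2
            \<and> O_w 1 G \<and> O_w (m + 1) (dz2 G)
            \<and> (\<forall>l \<le> m. (dw2 ^^ l) G 0 0 \<in> \<real>)"
proof -
  define phi where "phi = hyp_phi m eps h"
  define phi' where "phi' = hyp_phi m eps h'"
  define W where "W = (\<lambda>a b c. varU a b c + \<i> * phi a b c)"
  define Wb where "Wb = (\<lambda>a b c. varU a b c - \<i> * phi a b c)"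
  define Fz where "Fz = subst3 (lift2 F) varZ W zero3"
  define Fb where "Fb = subst3 (lift2 (cnj2 F)) varX Wb zero3"
  define Gz where "Gz = subst3 (lift2 G) varZ W zero3"
  define Gb where "Gb = subst3 (lift2 (cnj2 G)) varX Wb zero3"
  define R where "R = (\<lambda>a b c. (Gz a b c + Gb a b c) / 2)"
  have eq: "\<And>a b c. Gz a b c - Gb a b c = 2 * \<i> * subst3 phi' Fz Fb R a b c"
    using assms(8) unfolding maps_into_def Let_def phi_def phi'_def W_def Wb_def Fz_def Fb_def
      Gz_def Gb_def R_def by blast
  have m1: "m \<ge> 1" by (rule assms(1))
  define e where "e = \<i> * complex_of_real eps / 2"
  define Ws where "Ws = swap3 Wb"
  have W1: "\<And>b c. W 0 b c = (if b = 0 \<and> c = 1 then 1 else 0)"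
    unfolding W_def phi_def varU_def hyp_phi_def by simp
  have W2: "\<And>a c. W a 0 c = (if a = 0 \<and> c = 1 then 1 else 0)"
    unfolding W_def phi_def varU_def hyp_phi_def by simp
  have W3: "\<And>c. W 1 1 c = (if c = m then e else 0)"
    unfolding W_def phi_def varU_def hyp_phi_def e_def by simp
  have W4: "uo 1 W"
    using m1 unfolding uo_def W_def phi_def varU_def hyp_phi_def by simp
  have S1: "\<And>b c. Ws 0 b c = (if b = 0 \<and> c = 1 then 1 else 0)"
    unfolding Ws_def swap3_def Wb_def phi_def varU_def hyp_phi_def by simp
  have S2: "\<And>a c. Ws a 0 c = (if a = 0 \<and> c = 1 then 1 else 0)"
    unfolding Ws_def swap3_def Wb_def phi_def varU_def hyp_phi_def by simp
  have S3: "\<And>c. Ws 1 1 c = (if c = m then - e else 0)"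
    unfolding Ws_def swap3_def Wb_def phi_def varU_def hyp_phi_def e_def by simp
  have S4: "uo 1 Ws"
    using m1 unfolding uo_def Ws_def swap3_def Wb_def phi_def varU_def hyp_phi_def by simp
  have Fb_eq: "\<And>a b c. Fb a b c = subst3 (lift2 (cnj2 F)) varZ Ws zero3 b a c"
    unfolding Fb_def Ws_def by (rule SX_swap)
  have Gb_eq: "\<And>a b c. Gb a b c = subst3 (lift2 (cnj2 G)) varZ Ws zero3 b a c"
    unfolding Gb_def Ws_def by (rule SX_swap)
  have Fz_a0: "\<And>a c. Fz a 0 c = F a c"
    unfolding Fz_def by (rule SZ_a0[where W=W, OF W2])
  have Fz_0b: "\<And>b c. Fz 0 b c = (if b = 0 then F 0 c else 0)"
    unfolding Fz_def by (rule SZ_0b[where W=W, OF W1])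
  have Fb_a0: "\<And>a c. Fb a 0 c = (if a = 0 then cnj (F 0 c) else 0)"
    unfolding Fb_eq SZ_0b[where W=Ws, OF S1] by (simp add: cnj2_def)
  have Fb_0b: "\<And>b c. Fb 0 b c = cnj (F b c)"
    unfolding Fb_eq SZ_a0[where W=Ws, OF S2] by (simp add: cnj2_def)
  have Gz_a0: "\<And>a c. Gz a 0 c = G a c"
    unfolding Gz_def by (rule SZ_a0[where W=W, OF W2])
  have Gb_a0: "\<And>a c. Gb a 0 c = (if a = 0 then cnj (G 0 c) else 0)"
    unfolding Gb_eq SZ_0b[where W=Ws, OF S1] by (simp add: cnj2_def)
  have Gz_ab0: "\<And>a b. Gz a b 0 = (if b = 0 then G a 0 else 0)"
    unfolding Gz_def by (rule SZ_ab0[where W=W, OF W4])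
  have Gb_ab0: "\<And>a b. Gb a b 0 = (if a = 0 then cnj (G b 0) else 0)"
    unfolding Gb_eq SZ_ab0[where W=Ws, OF S4] by (simp add: cnj2_def)
  have Gz_11: "Gz 1 1 m = G 0 1 * e"
    unfolding Gz_def by (rule SZ_11m[where W=W, OF W1 W2 W3 m1])
  have Gb_11: "Gb 1 1 m = cnj (G 0 1) * (- e)"
    unfolding Gb_eq SZ_11m[where W=Ws, OF S1 S2 S3 m1] by (simp add: cnj2_def)
  have phinz: "\<And>i j k. phi' i j k \<noteq> 0 \<Longrightarrow> j \<ge> 1 \<and> k \<ge> m"
    unfolding phi'_def using hyp_phi_nz by fastforce
  have Fb_u0o: "u0o 1 Fb" unfolding u0o_def using Fb_a0 assms(5) by simp
  have G_a0: "\<And>a. G a 0 = 0"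
  proof -
    fix a
    have "subst3 phi' Fz Fb R a 0 0 = 0"
      by (rule subst_phi_b0[where m=m, OF Fb_u0o u0o_zero _ phinz]) simp
    then have "Gz a 0 0 - Gb a 0 0 = 0" using eq by simp
    then show "G a 0 = 0" using Gz_a0 Gb_a0 assms(6) by simp
  qed
  have R_uo: "uo 1 R" unfolding uo_def R_def using Gz_ab0 Gb_ab0 G_a0 by simp
  have G_low: "\<And>a c. c \<le> m \<Longrightarrow> G a c = (if a = 0 then cnj (G 0 c) else 0)"
  proof -
    fix a c assume c: "c \<le> m"
    have "subst3 phi' Fz Fb R a 0 c = 0"
      by (rule subst_phi_b0[where m=m, OF Fb_u0o uo_u0o[OF R_uo] _ phinz]) (simp add: c le_imp_less_Suc)
    then have "Gz a 0 c - Gb a 0 c = 0" using eq by simp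
    then show "G a c = (if a = 0 then cnj (G 0 c) else 0)" using Gz_a0 Gb_a0 by simp
  qed
  define lam where "lam = F 1 0"
  define mu where "mu = Re (G 0 1)"
  have G01: "G 0 1 = complex_of_real mu"
    using G_low[of 1 0] m1 by (simp add: mu_def complex_eq_iff)
  have R001: "R 0 0 1 = complex_of_real mu"
    unfolding R_def using Gz_a0 Gb_a0 G01 by simp
  define Q where "Q = pow3 R m"
  define P where "P = mul3 Fb Q"
  have Q_uo: "uo m Q" using uo_pow[OF R_uo, of m] by (simp add: Q_def)
  have P_uo: "uo m P" using uo_mul[OF uo_zero Q_uo] by (simp add: P_def)
  have P_u0o: "u0o (1 + m) P" using u0o_mul[OF Fb_u0o uo_u0o[OF Q_uo]] by (simp add: P_def)
  have Q00: "Q 0 0 m = complex_of_real mu ^ m" using pow_00[OF R_uo, of m] R001 by (simp add: Q_def)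
  have P01: "P 0 1 m = cnj lam * Q 0 0 m"
  proof -
    have "P 0 1 m = (\<Sum>j\<le>1. \<Sum>k\<le>m. Fb 0 j k * Q 0 (1-j) (m-k))"
      unfolding P_def by (rule mul3_0b)
    also have "\<dots> = (\<Sum>k\<le>m. Fb 0 0 k * Q 0 1 (m-k)) + (\<Sum>k\<le>m. Fb 0 1 k * Q 0 0 (m-k))"
      by simp
    also have "(\<Sum>k\<le>m. Fb 0 0 k * Q 0 1 (m-k)) = 0"
    proof (intro sum.neutral ballI)
      fix k assume "k \<in> {..m}"
      show "Fb 0 0 k * Q 0 1 (m-k) = 0"
      proof (cases "k = 0")
        case True then show ?thesis using Fb_0b assms(5) by simp
      next
        case False then show ?thesis using Q_uo \<open>k \<in> {..m}\<close> unfolding uo_def by simp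
      qed
    qed
    also have "(\<Sum>k\<le>m. Fb 0 1 k * Q 0 0 (m-k)) = Fb 0 1 0 * Q 0 0 (m - 0)"
    proof (rule sum_only)
      fix k assume "k \<le> m" "k \<noteq> 0"
      then show "Fb 0 1 k * Q 0 0 (m-k) = 0" using Q_uo unfolding uo_def by simp
    qed simp
    finally show ?thesis using Fb_0b by (simp add: lam_def)
  qed
  have main: "mul3 Fz P 1 1 m = lam * P 0 1 m"
  proof -
    have "mul3 Fz P 1 1 m = (\<Sum>k\<le>m. Fz 0 0 k * P 1 1 (m-k) + Fz 0 1 k * P 1 0 (m-k)
      + Fz 1 0 k * P 0 1 (m-k) + Fz 1 1 k * P 0 0 (m-k))" by (rule mul3_11)
    also have "\<dots> = Fz 0 0 0 * P 1 1 (m-0) + Fz 0 1 0 * P 1 0 (m-0)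
      + Fz 1 0 0 * P 0 1 (m-0) + Fz 1 1 0 * P 0 0 (m-0)"
    proof (rule sum_only)
      fix k assume k: "k \<le> m" "k \<noteq> 0"
      have "P 1 1 (m-k) = 0" "P 1 0 (m-k) = 0" "P 0 1 (m-k) = 0"
        using P_uo k unfolding uo_def by auto
      moreover have "P 0 0 (m-k) = 0" using P_u0o k unfolding u0o_def by auto
      ultimately show "Fz 0 0 k * P 1 1 (m-k) + Fz 0 1 k * P 1 0 (m-k)
      + Fz 1 0 k * P 0 1 (m-k) + Fz 1 1 k * P 0 0 (m-k) = 0" by simp
    qed simp
    also have "\<dots> = lam * P 0 1 m"
    proof -
      have "Fz 0 0 0 = 0" using Fz_a0 assms(5) by simp
      moreover have "Fz 0 1 0 = 0" using Fz_0b[of 1 0] by simp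
      moreover have "Fz 1 0 0 = lam" using Fz_a0 by (simp add: lam_def)
      moreover have "P 0 0 m = 0" using P_u0o unfolding u0o_def by simp
      ultimately show ?thesis by simp
    qed
    finally show ?thesis .
  qed
  have rhs: "subst3 phi' Fz Fb R 1 1 m = complex_of_real eps / 2 * (lam * (cnj lam * complex_of_real mu ^ m))"
    unfolding phi'_def subst_phi_11m using main P01 Q00 by (simp add: P_def Q_def)
  have lhs: "Gz 1 1 m - Gb 1 1 m = \<i> * complex_of_real eps * complex_of_real mu"
  proof -
    have "Gz 1 1 m - Gb 1 1 m = G 0 1 * e - cnj (G 0 1) * (- e)" by (simp only: Gz_11 Gb_11)
    also have "\<dots> = \<i> * complex_of_real eps * complex_of_real mu"
      by (simp only: G01) (simp add: e_def field_simps)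
    finally show ?thesis .
  qed
  have "\<i> * complex_of_real eps * complex_of_real mu =
        2 * \<i> * (complex_of_real eps / 2 * (lam * (cnj lam * complex_of_real mu ^ m)))"
    using eq[of 1 1 m] unfolding lhs rhs .
  then have H: "complex_of_real (eps * mu) = complex_of_real eps * (lam * cnj lam) * complex_of_real mu ^ m"
    by (simp add: algebra_simps)
  have ns: "lam * cnj lam = complex_of_real ((cmod lam)^2)" by (rule complex_norm_square[symmetric])
  have "complex_of_real (eps * mu) = complex_of_real (eps * ((cmod lam)^2 * mu ^ m))"
    unfolding H ns by simp
  then have "eps * mu = eps * ((cmod lam)^2 * mu ^ m)" by (rule of_real_eq_iff[THEN iffD1])
  moreover have "eps \<noteq> 0" using assms(2) by auto
  ultimately have key: "mu = (cmod lam)^2 * mu ^ m" by simp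
  have nz: "lam \<noteq> 0" "mu \<noteq> 0" using assms(7) G_a0[of 1] G01 by (auto simp: lam_def)
  obtain m' where m': "m = Suc m'" using m1 by (cases m) auto
  have pw: "mu powi (1 - int m) = (cmod lam)^2"
  proof -
    have "mu = (cmod lam)^2 * mu ^ m' * mu" using key m' by (simp add: algebra_simps)
    then have "1 = (cmod lam)^2 * mu ^ m'" using nz(2) by (simp add: field_simps)
    moreover have "mu powi (1 - int m) = inverse (mu ^ m')"
      by (simp add: m' power_int_minus)
    moreover have "inverse (mu ^ m') = (cmod lam)^2"
      by (rule inverse_unique) (simp add: \<open>1 = (cmod lam)^2 * mu ^ m'\<close> mult.commute)
    ultimately show ?thesis by simp
  qed
  show ?thesis
  proof (intro exI conjI allI impI)
    show "lam \<noteq> 0" by (rule nz(1))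
    show "dz2 F 0 0 = lam" by (simp add: dz2_def lam_def)
    show "dw2 G 0 0 = complex_of_real mu" using G01 by (simp add: dw2_def)
    show "mu powi (1 - int m) = (cmod lam)^2" by (rule pw)
    show "O_w 1 G" unfolding O_w_def using G_a0 by simp
    show "O_w (m + 1) (dz2 G)" unfolding O_w_def dz2_def using G_low by simp
  next
    fix l assume l: "l \<le> m"
    obtain c where c: "(dw2 ^^ l) G 0 0 = of_nat c * G 0 (0 + l)" using dw2_iter by blast
    have "G 0 l \<in> \<real>" using G_low[OF l, of 0] by (simp add: Reals_cnj_iff)
    then show "(dw2 ^^ l) G 0 0 \<in> \<real>" using c by simp
  qed
qed

end
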